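(* For every $\varepsilon>0$ and positive integer $m$ there is $p_0(\varepsilon,m)$ such that for every prime $p\ge p_0(\varepsilon,m)$ there exists a Euclidean sub-$p$-toral set $B=\{b_1,\dots,b_m\}$ (in some Euclidean space) with $\bigl|\,|b_i-b_j|-|i-j|\,\bigr|<\varepsilon$ for all $i,j$.
   Context: A $p$-torus is a group isomorphic to $(\mathbb{Z}_p)^\alpha$ for some $\alpha\ge1$. A set $X\subset\mathbb{R}^k$ is Euclidean sub-$p$-toral if there exist $n\ge k$, a $p$-torus $G$ and an action of $G$ on $\mathbb{R}^n$ by isometries such that $X$ (viewed in $\mathbb{R}^n$ via the standard inclusion $\mathbb{R}^k\subset\mathbb{R}^n$) is contained in a single $G$-orbit. *)

theory Defs
  imports Complex_Main "HOL-Computational_Algebra.Primes"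
begin

text \<open>Euclidean space R^n, modelled as real sequences vanishing from index n on.
  The standard inclusion R^k \<subseteq> R^n (k \<le> n) is then literally set inclusion.\<close>
definition euclid :: "nat \<Rightarrow> (nat \<Rightarrow> real) set" where
  "euclid n = {x. \<forall>i\<ge>n. x i = 0}"

definition edist :: "nat \<Rightarrow> (nat \<Rightarrow> real) \<Rightarrow> (nat \<Rightarrow> real) \<Rightarrow> real" where
  "edist n x y = sqrt (\<Sum>i<n. (x i - y i)^2)"

definition ptorus :: "nat \<Rightarrow> nat \<Rightarrow> (nat \<Rightarrow> nat) set" where
  "ptorus p \<alpha> = {g. (\<forall>i<\<alpha>. g i < p) \<and> (\<forall>i\<ge>\<alpha>. g i = 0)}"

definition tadd :: "nat \<Rightarrow> (nat \<Rightarrow> nat) \<Rightarrow> (nat \<Rightarrow> nat) \<Rightarrow> (nat \<Rightarrow> nat)" where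
  "tadd p g h = (\<lambda>i. (g i + h i) mod p)"

definition isometric_action ::
  "nat \<Rightarrow> nat \<Rightarrow> nat \<Rightarrow> ((nat \<Rightarrow> nat) \<Rightarrow> (nat \<Rightarrow> real) \<Rightarrow> (nat \<Rightarrow> real)) \<Rightarrow> bool" where
  "isometric_action p \<alpha> n act \<longleftrightarrow>
     (\<forall>g\<in>ptorus p \<alpha>. act g ` euclid n = euclid n \<and>
        (\<forall>x\<in>euclid n. \<forall>y\<in>euclid n. edist n (act g x) (act g y) = edist n x y)) \<and>
     (\<forall>x\<in>euclid n. act (\<lambda>_. 0) x = x) \<and>
     (\<forall>g\<in>ptorus p \<alpha>. \<forall>h\<in>ptorus p \<alpha>. \<forall>x\<in>euclid n.
        act (tadd p g h) x = act g (act h x))"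

definition sub_ptoral :: "nat \<Rightarrow> nat \<Rightarrow> (nat \<Rightarrow> real) set \<Rightarrow> bool" where
  "sub_ptoral p k X \<longleftrightarrow> X \<subseteq> euclid k \<and>
     (\<exists>n\<ge>k. \<exists>\<alpha>\<ge>1. \<exists>act. isometric_action p \<alpha> n act \<and>
        (\<exists>x0\<in>euclid n. X \<subseteq> (\<lambda>g. act g x0) ` ptorus p \<alpha>))"

end

theory Submission
  imports Defs
begin


definition rot :: "real \<Rightarrow> (nat \<Rightarrow> real) \<Rightarrow> (nat \<Rightarrow> real)" where
  "rot t x = (\<lambda>i. if i = 0 then cos t * x 0 - sin t * x 1
               else if i = 1 then sin t * x 0 + cos t * x 1 else x i)"

lemma rot_add: "rot (s + t) x = rot s (rot t x)"
  by (rule ext) (auto simp: rot_def cos_add sin_add algebra_simps)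

lemma rot_0: "rot 0 x = x"
  by (rule ext) (auto simp: rot_def)

lemma rot_euclid: "x \<in> euclid 2 \<Longrightarrow> rot t x \<in> euclid 2"
  by (auto simp: rot_def euclid_def)

lemma rot_image: "rot t ` euclid 2 = euclid 2"
proof
  show "rot t ` euclid 2 \<subseteq> euclid 2" using rot_euclid by auto
  show "euclid 2 \<subseteq> rot t ` euclid 2"
  proof
    fix x assume "x \<in> euclid 2"
    moreover have "x = rot t (rot (-t) x)" by (metis rot_add rot_0 add.right_inverse)
    ultimately show "x \<in> rot t ` euclid 2" using rot_euclid by blast
  qed
qed

lemma edist2: "edist 2 x y = sqrt ((x 0 - y 0)^2 + (x 1 - y 1)^2)"
  by (simp add: edist_def numeral_2_eq_2 lessThan_Suc)

lemma rot_isom: "edist 2 (rot t x) (rot t y) = edist 2 x y"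
proof -
  have "(cos t * x 0 - sin t * x 1 - (cos t * y 0 - sin t * y 1))^2 +
        (sin t * x 0 + cos t * x 1 - (sin t * y 0 + cos t * y 1))^2
      = (sin t ^2 + cos t ^2) * ((x 0 - y 0)^2 + (x 1 - y 1)^2)"
    by algebra
  then show ?thesis by (simp add: edist2 rot_def)
qed

lemma rot_period: "rot (t + 2 * pi * real q) = rot t"
proof -
  have c: "cos (2 * pi * real q) = 1" and s: "sin (2 * pi * real q) = 0"
    using cos_2npi[of q] sin_2npi[of q] by (simp_all add: mult.commute mult.left_commute)
  have "rot (2 * pi * real q) = id"
    by (intro ext) (simp add: rot_def c s)
  then show ?thesis by (metis add.commute rot_add id_apply ext)
qed



lemma fact3: "(fact 3 :: real) = 6"
  by (simp add: numeral_3_eq_3)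

lemma sin_lower: "x - \<bar>x\<bar>^3/6 \<le> sin (x::real)"
proof -
  have "\<bar>sin x - (\<Sum>m<3. sin_coeff m * x ^ m)\<bar> \<le> inverse (fact 3) * \<bar>x\<bar> ^ 3"
    by (rule Maclaurin_sin_bound)
  moreover have "(\<Sum>m<3. sin_coeff m * x ^ m) = x"
    by (simp add: numeral_3_eq_3 sin_coeff_def)
  moreover have "inverse (fact 3) * \<bar>x\<bar> ^ 3 = \<bar>x\<bar>^3/6"
    unfolding fact3 by (rule inverse_eq_divide[THEN arg_cong[where f="\<lambda>t. t * _"], THEN trans]) simp
  ultimately show ?thesis by linarith
qed

lemma ratio_bound:
  fixes D u :: real
  assumes D: "0 \<le> D" and u: "0 < u" "u \<le> 1" and Du: "D * u \<le> pi"
  shows "\<bar>sin (D*u) / sin u - D\<bar> \<le> (D^3 + D) * u^2"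
proof -
  have su: "sin u > 0" using u pi_ge_two by (intro sin_gt_zero) auto
  have su1: "sin u \<le> u" using u sin_x_le_x by simp
  have su2: "u - u^3/6 \<le> sin u" using sin_lower[of u] u by simp
  have sd1: "sin (D*u) \<le> D*u" using D u sin_x_le_x by simp
  have sd2: "D*u - (D*u)^3/6 \<le> sin (D*u)" using sin_lower[of "D*u"] D u by simp
  have sd0: "0 \<le> sin (D*u)" using D u Du by (intro sin_ge_zero) auto
  have p1: "D*u \<le> (D + D*u^2)*(u - u^3/6)"
  proof -
    have "(D + D*u^2)*(u - u^3/6) - D*u = D*u^3*(5 - u^2)/6"
      by (simp add: algebra_simps power2_eq_square power3_eq_cube)
    moreover have "u^2 \<le> 1" using u by (simp add: power_le_one)
    then have "0 \<le> D*u^3*(5 - u^2)/6" using D u by (intro divide_nonneg_nonneg mult_nonneg_nonneg) auto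
    ultimately show ?thesis by linarith
  qed
  have "(D + D*u^2)*(u - u^3/6) \<le> (D + D*u^2) * sin u"
    using su2 D by (intro mult_left_mono) auto
  with sd1 p1 have up: "sin (D*u) \<le> (D + D*u^2) * sin u" by linarith
  have lo: "(D - D^3*u^2) * sin u \<le> sin (D*u)"
  proof (cases "D - D^3*u^2 \<le> 0")
    case True
    then have "(D - D^3*u^2) * sin u \<le> 0" using su by (simp add: mult_nonpos_nonneg)
    then show ?thesis using sd0 by linarith
  next
    case False
    then have "(D - D^3*u^2) * sin u \<le> (D - D^3*u^2) * u" using su1 by (intro mult_left_mono) auto
    also have "\<dots> = D*u - D^3*u^3" by (simp add: algebra_simps power2_eq_square power3_eq_cube)
    also have "\<dots> \<le> D*u - (D*u)^3/6"
    proof -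
      have "0 \<le> D^3*u^3" using D u by simp
      moreover have "(D*u)^3 = D^3*u^3" by (rule power_mult_distrib)
      ultimately show ?thesis by linarith
    qed
    finally show ?thesis using sd2 by linarith
  qed
  have a: "sin (D*u) / sin u \<le> D + D*u^2" using up su by (simp add: divide_le_eq)
  have b: "D - D^3*u^2 \<le> sin (D*u) / sin u" using lo su by (simp add: le_divide_eq)
  have e1: "(D^3+D)*u^2 = D^3*u^2 + D*u^2" by (rule distrib_right)
  have "0 \<le> D^3*u^2" "0 \<le> D*u^2" using D by simp_all
  then have "sin (D*u) / sin u - D \<le> (D^3 + D) * u^2" "-(sin (D*u) / sin u - D) \<le> (D^3 + D) * u^2"
    using a b e1 by linarith+
  then show ?thesis by (intro abs_leI)
qed


lemma dist_rot:
  assumes R: "0 \<le> R"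
  shows "edist 2 (rot a (\<lambda>j. if j = 0 then R else 0)) (rot c (\<lambda>j. if j = 0 then R else 0))
         = 2 * R * \<bar>sin ((a - c) / 2)\<bar>"
proof -
  have e: "(R * cos a - R * cos c)^2 + (R * sin a - R * sin c)^2
        = R^2 * ((sin a ^2 + cos a^2) + (sin c ^2 + cos c^2) - 2 * (cos a * cos c + sin a * sin c))"
    by algebra
  also have "\<dots> = R^2 * (2 - 2 * cos (a - c))" by (simp add: cos_diff)
  finally have e: "(R * cos a - R * cos c)^2 + (R * sin a - R * sin c)^2
        = R^2 * (2 - 2 * cos (a - c))" .
  have "cos (a - c) = cos (2 * ((a - c)/2))" by (rule arg_cong[where f=cos]) simp
  then have "2 - 2 * cos (a - c) = 4 * sin ((a-c)/2)^2" by (simp only: cos_double_sin) simp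
  then have "(R * cos a - R * cos c)^2 + (R * sin a - R * sin c)^2 = (2 * R * sin ((a-c)/2))^2"
    using e by (simp add: power_mult_distrib)
  then have q: "(cos a * R - cos c * R)^2 + (sin a * R - sin c * R)^2 = (2 * R * sin ((a-c)/2))^2"
    by (simp only: mult.commute)
  have "edist 2 (rot a (\<lambda>j. if j = 0 then R else 0)) (rot c (\<lambda>j. if j = 0 then R else 0))
     = sqrt ((cos a * R - cos c * R)^2 + (sin a * R - sin c * R)^2)"
    by (simp add: edist2 rot_def)
  also have "\<dots> = \<bar>2 * R * sin ((a-c)/2)\<bar>" by (simp only: q real_sqrt_abs)
  finally show ?thesis using R by (simp add: abs_mult)
qed

definition act :: "nat \<Rightarrow> (nat \<Rightarrow> nat) \<Rightarrow> (nat \<Rightarrow> real) \<Rightarrow> (nat \<Rightarrow> real)" where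
  "act p g = rot (2 * pi * real (g 0) / real p)"

lemma act_iso:
  assumes p: "p > 0"
  shows "isometric_action p 1 2 (act p)"
  unfolding isometric_action_def
proof (intro conjI ballI)
  fix g :: "nat \<Rightarrow> nat"
  show "act p g ` euclid 2 = euclid 2" by (simp add: act_def rot_image)
  fix x y assume "x \<in> euclid 2" "y \<in> euclid 2"
  show "edist 2 (act p g x) (act p g y) = edist 2 x y" by (simp add: act_def rot_isom)
next
  fix x :: "nat \<Rightarrow> real"
  show "act p (\<lambda>_. 0) x = x" by (simp add: act_def rot_0)
next
  fix g h :: "nat \<Rightarrow> nat" and x :: "nat \<Rightarrow> real"
  define s where "s = g 0 + h 0"
  have "real s = real (s mod p) + real p * real (s div p)"
    by (metis of_nat_add of_nat_mult mod_mult_div_eq)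
  then have "2 * pi * real s / real p = 2 * pi * real (s mod p) / real p + 2 * pi * real (s div p)"
    using p by (simp add: field_simps)
  then have "rot (2 * pi * real (s mod p) / real p) = rot (2 * pi * real s / real p)"
    by (simp add: rot_period)
  also have "2 * pi * real s / real p = 2 * pi * real (g 0) / real p + 2 * pi * real (h 0) / real p"
    by (simp add: s_def add_divide_distrib distrib_left)
  finally show "act p (tadd p g h) x = act p g (act p h x)"
    by (simp add: act_def tadd_def s_def rot_add)
qed

lemma sin_abs:
  fixes D u :: real
  assumes u: "0 < u" and Du: "\<bar>D\<bar> * u \<le> pi"
  shows "\<bar>sin (D * u)\<bar> = sin (\<bar>D\<bar> * u)"
proof (cases "D \<ge> 0")
  case True
  then have a: "\<bar>D\<bar> = D" by simp
  have "0 \<le> sin (D * u)" using True u Du a by (intro sin_ge_zero) auto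
  then have "\<bar>sin (D * u)\<bar> = sin (D * u)" by (rule abs_of_nonneg)
  then show ?thesis by (simp only: a)
next
  case False
  then have "\<bar>D\<bar> * u = - (D * u)" by simp
  then have "sin (D * u) = - sin (\<bar>D\<bar> * u)" by (simp only: sin_minus minus_minus)
  moreover have "0 \<le> sin (\<bar>D\<bar> * u)" using u Du by (intro sin_ge_zero) auto
  ultimately show ?thesis by (simp only: abs_minus abs_of_nonneg)
qed

lemma final_bound:
  fixes D u \<epsilon> :: real and m p :: nat
  assumes D: "0 \<le> D" "D \<le> real m" and m: "m \<ge> 1" and p: "real p \<ge> 4"
    and u: "u = pi / real p" and pe: "32 * real m ^ 3 < \<epsilon> * real p"
  shows "(D^3 + D) * u^2 < \<epsilon>"
proof -
  have p0: "real p > 0" using p by simp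
  have "D^3 \<le> real m ^ 3" using D by (intro power_mono) auto
  moreover have "real m \<le> real m ^ 3" using m
    by (metis of_nat_1 of_nat_le_iff one_le_power power_one_right power_increasing zero_less_numeral le_numeral_extra(1) numeral_One
        one_le_numeral)
  ultimately have d: "D^3 + D \<le> 2 * real m ^ 3" using D by linarith
  have "u^2 = pi^2 / real p ^ 2" using u by (simp add: power_divide)
  also have "\<dots> \<le> 16 / real p ^ 2"
  proof -
    have "pi^2 \<le> 4^2" using pi_less_4 pi_gt_zero by (intro power_mono) auto
    then show ?thesis using p0 by (simp add: divide_right_mono)
  qed
  also have "\<dots> \<le> 16 / real p"
  proof -
    have "real p \<le> real p ^ 2" using p by (simp add: power2_eq_square)
    then show ?thesis using p0 by (intro divide_left_mono) auto
  qed
  finally have uu: "u^2 \<le> 16 / real p" .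
  have "(D^3 + D) * u^2 \<le> (2 * real m ^ 3) * (16 / real p)"
    using d uu D by (intro mult_mono) auto
  also have "\<dots> = 32 * real m ^ 3 / real p" by simp
  also have "\<dots> < \<epsilon>" using pe p0 by (simp add: divide_less_eq)
  finally show ?thesis .
qed


theorem lemma6:
  shows "\<forall>\<epsilon>::real. \<epsilon> > 0 \<longrightarrow> (\<forall>m::nat. m > 0 \<longrightarrow>
    (\<exists>p0::nat. \<forall>p::nat. prime p \<and> p \<ge> p0 \<longrightarrow>
      (\<exists>k::nat. \<exists>b :: nat \<Rightarrow> (nat \<Rightarrow> real).
         (\<forall>i\<in>{1..m}. b i \<in> euclid k) \<and>
         sub_ptoral p k (b ` {1..m}) \<and>
         (\<forall>i\<in>{1..m}. \<forall>j\<in>{1..m}.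
            \<bar>edist k (b i) (b j) - \<bar>real i - real j\<bar>\<bar> < \<epsilon>))))"
proof (intro allI impI)
  fix \<epsilon> :: real and m :: nat
  assume e: "\<epsilon> > 0" and m: "m > 0"
  define p0 where "p0 = nat \<lceil>32 * real m ^ 3 / \<epsilon>\<rceil> + m + 4"
  show "\<exists>p0::nat. \<forall>p::nat. prime p \<and> p \<ge> p0 \<longrightarrow>
      (\<exists>k::nat. \<exists>b :: nat \<Rightarrow> (nat \<Rightarrow> real).
         (\<forall>i\<in>{1..m}. b i \<in> euclid k) \<and>
         sub_ptoral p k (b ` {1..m}) \<and>
         (\<forall>i\<in>{1..m}. \<forall>j\<in>{1..m}.
            \<bar>edist k (b i) (b j) - \<bar>real i - real j\<bar>\<bar> < \<epsilon>))"
  proof (rule exI[of _ p0], intro allI impI)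
    fix p :: nat assume pp: "prime p \<and> p0 \<le> p"
    then have pge: "p \<ge> p0" by simp
    have p4: "real p \<ge> 4" using pge unfolding p0_def by linarith
    have pm: "m < p" using pge unfolding p0_def by linarith
    have pP: "p > 0" using pm by simp
    have p0r: "real p > 0" using p4 by simp
    have pe: "32 * real m ^ 3 < \<epsilon> * real p"
    proof -
      have "32 * real m ^ 3 / \<epsilon> \<le> real (nat \<lceil>32 * real m ^ 3 / \<epsilon>\<rceil>)"
        by (metis le_nat_iff of_nat_le_iff real_nat_ceiling_ge)
      also have "\<dots> < real p" using pge unfolding p0_def by simp
      finally show ?thesis using e by (simp add: divide_less_eq mult.commute)
    qed
    define u where "u = pi / real p"
    have u0: "u > 0" using p0r by (simp add: u_def)
    have u1: "u \<le> 1"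
    proof -
      have "pi \<le> real p" using pi_less_4 p4 by linarith
      then show ?thesis using p0r by (simp add: u_def divide_le_eq)
    qed
    have su: "sin u > 0" using u0 u1 pi_ge_two by (intro sin_gt_zero) auto
    define R where "R = 1 / (2 * sin u)"
    have R0: "R \<ge> 0" using su by (simp add: R_def)
    define x0 :: "nat \<Rightarrow> real" where "x0 = (\<lambda>j. if j = 0 then R else 0)"
    define gi :: "nat \<Rightarrow> nat \<Rightarrow> nat" where "gi = (\<lambda>i j. if j = 0 then i else 0)"
    define b where "b = (\<lambda>i. act p (gi i) x0)"
    have x0e: "x0 \<in> euclid 2" by (simp add: x0_def euclid_def)
    have be: "\<forall>i\<in>{1..m}. b i \<in> euclid 2"
      using x0e by (simp add: b_def act_def rot_euclid)
    have gip: "gi i \<in> ptorus p 1" if "i \<in> {1..m}" for i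
      using that pm by (auto simp: gi_def ptorus_def)
    have sub: "sub_ptoral p 2 (b ` {1..m})"
      unfolding sub_ptoral_def
    proof (intro conjI)
      show "b ` {1..m} \<subseteq> euclid 2" using be by auto
      show "\<exists>n\<ge>2. \<exists>\<alpha>\<ge>1. \<exists>act. isometric_action p \<alpha> n act \<and>
        (\<exists>x0\<in>euclid n. b ` {1..m} \<subseteq> (\<lambda>g. act g x0) ` ptorus p \<alpha>)"
        using act_iso[OF pP] x0e gip unfolding b_def by blast
    qed
    have dist: "\<bar>edist 2 (b i) (b j) - \<bar>real i - real j\<bar>\<bar> < \<epsilon>"
      if i: "i \<in> {1..m}" and j: "j \<in> {1..m}" for i j
    proof -
      define D where "D = \<bar>real i - real j\<bar>"
      have D0: "0 \<le> D" by (simp add: D_def)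
      have Dm: "D \<le> real m" using i j by (auto simp: D_def abs_if)
      have Du: "D * u \<le> pi"
      proof -
        have "D \<le> real p" using Dm pm by linarith
        then have "D * u \<le> real p * u" using u0 by (intro mult_right_mono) auto
        also have "real p * u = pi" using p0r by (simp add: u_def)
        finally show ?thesis .
      qed
      have "edist 2 (b i) (b j) = 2 * R * \<bar>sin ((2 * pi * real i / real p - 2 * pi * real j / real p) / 2)\<bar>"
        unfolding b_def act_def gi_def x0_def using R0 by (simp add: dist_rot)
      also have "(2 * pi * real i / real p - 2 * pi * real j / real p) / 2 = (real i - real j) * u"
        using p0r by (simp add: u_def field_simps)
      also have "\<bar>sin ((real i - real j) * u)\<bar> = sin (D * u)"
        unfolding D_def using sin_abs[OF u0] Du D_def by simp
      also have "2 * R * sin (D * u) = sin (D * u) / sin u"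
        using su by (simp add: R_def)
      finally have ed: "edist 2 (b i) (b j) = sin (D * u) / sin u" .
      have "\<bar>sin (D*u) / sin u - D\<bar> \<le> (D^3 + D) * u^2"
        using ratio_bound[OF D0 u0 u1 Du] .
      also have "\<dots> < \<epsilon>"
        using final_bound[OF D0 Dm _ p4 u_def pe] m by simp
      finally show ?thesis using ed by (simp add: D_def)
    qed
    show "\<exists>k::nat. \<exists>b :: nat \<Rightarrow> (nat \<Rightarrow> real).
         (\<forall>i\<in>{1..m}. b i \<in> euclid k) \<and>
         sub_ptoral p k (b ` {1..m}) \<and>
         (\<forall>i\<in>{1..m}. \<forall>j\<in>{1..m}.
            \<bar>edist k (b i) (b j) - \<bar>real i - real j\<bar>\<bar> < \<epsilon>)"
      using be sub dist by blast
  qed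
qed

end
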